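(* Let $z:[0,\infty)\to X_{0+}$ be a solution of the modified Becker–Döring equations obtained by the truncation construction described in the context. Suppose there exist $R'\in[0,R)$ and $t_0\ge0$ such that $$\lambda(t):=\frac{z_1(t)}{N(z(t))}\le R'\qquad\text{for all }t\ge t_0 .$$ Then every element $z^\infty$ of the weak-$*$ $\omega$-limit set of $z$ satisfies $\rho(z^\infty)=\rho_0$.
   Context: Let $(q_l)_{l\ge1}$ be positive with $q_1=1$, $0<R:=\lim_l q_l/q_{l+1}<\infty$, and $\gamma_l>0$ with $\gamma_l/l\to0$. $X=\{z:\sum_l l|z_l|<\infty\}$; a sequence in $X$ converges weak-$*$ iff it is norm-bounded and converges componentwise. $X_{0+}$: nonnegative elements; $\rho(z)=\sum_l lz_l$, $N(z)=\sum_lz_l$, $J_l(z)=\gamma_l\big(z_1z_l-N(z)\frac{q_l}{q_{l+1}}z_{l+1}\big)$ ($l\ge1$), $J_0(z)=-\sum_{l\ge1}J_l(z)$. Fix $y\in X_{0+}$ with $y_1>0$, $\rho_0:=\rho(y)>0$. For $m\ge2$ let $z^{(m)}$ solve $\dot z_l=J_{l-1}(z)-J_l(z)$ ($2\le l\le m-1$), $\dot z_m=J_{m-1}(z)$, $\dot z_1=-J_1(z)-\sum_{l=1}^{m-1}J_l(z)$, $z_l(0)=y_l$ ($l\le m$), $z_l\equiv0$ for $l>m$. The solution $z$ is a continuous $[0,\infty)\to X$ map with $z^{(m_j)}_l\to z_l$ uniformly on compacts for every $l$ along some subsequence $m_j\to\infty$; it satisfies $z(t)\in X_{0+}$, $\rho(z(t))=\rho_0$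 for all $t$, and $\frac{d}{dt}\sum_{n\ge l}z_n(t)=J_{l-1}(z(t))$ for $l\ge2$. The weak-$*$ $\omega$-limit set is $\{w: w=\text{weak-}*\lim_k z(t_k)\text{ for some }t_k\to\infty\}$. *)

theory Defs
  imports "HOL-Analysis.Analysis"
begin

text \<open>Elements of X are sequences indexed by l \<ge> 1; we represent them as
  functions nat \<Rightarrow> real with the (unused) component 0 fixed to 0.\<close>

definition Xspace :: "(nat \<Rightarrow> real) set" where
  "Xspace = {z. z 0 = 0 \<and> summable (\<lambda>l. real l * \<bar>z l\<bar>)}"

definition normX :: "(nat \<Rightarrow> real) \<Rightarrow> real" where
  "normX z = (\<Sum>l. real l * \<bar>z l\<bar>)"

definition X0plus :: "(nat \<Rightarrow> real) set" where
  "X0plus = {z \<in> Xspace. \<forall>l. z l \<ge> 0}"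

definition rho :: "(nat \<Rightarrow> real) \<Rightarrow> real" where
  "rho z = (\<Sum>l. real l * z l)"

definition Nmass :: "(nat \<Rightarrow> real) \<Rightarrow> real" where
  "Nmass z = (\<Sum>l. z l)"

definition Jflux :: "(nat \<Rightarrow> real) \<Rightarrow> (nat \<Rightarrow> real) \<Rightarrow> nat \<Rightarrow> (nat \<Rightarrow> real) \<Rightarrow> real" where
  "Jflux q \<gamma> l z = \<gamma> l * (z 1 * z l - Nmass z * (q l / q (Suc l)) * z (Suc l))"

definition weak_star_conv :: "(nat \<Rightarrow> nat \<Rightarrow> real) \<Rightarrow> (nat \<Rightarrow> real) \<Rightarrow> bool" where
  "weak_star_conv s w \<longleftrightarrow> w \<in> Xspace \<and> (\<forall>k. s k \<in> Xspace) \<and>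
     (\<exists>B. \<forall>k. normX (s k) \<le> B) \<and> (\<forall>l. (\<lambda>k. s k l) \<longlonglongrightarrow> w l)"

definition omega_limit_set :: "(real \<Rightarrow> nat \<Rightarrow> real) \<Rightarrow> (nat \<Rightarrow> real) set" where
  "omega_limit_set z = {w. \<exists>t :: nat \<Rightarrow> real. filterlim t at_top sequentially \<and>
       weak_star_conv (\<lambda>k. z (t k)) w}"

definition truncated_solution ::
  "(nat \<Rightarrow> real) \<Rightarrow> (nat \<Rightarrow> real) \<Rightarrow> (nat \<Rightarrow> real) \<Rightarrow> nat \<Rightarrow> (real \<Rightarrow> nat \<Rightarrow> real) \<Rightarrow> bool" where
  "truncated_solution q \<gamma> y m zm \<longleftrightarrow>
     (\<forall>t\<ge>0. zm t 0 = 0 \<and> (\<forall>l>m. zm t l = 0)) \<and>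
     (\<forall>l. 1 \<le> l \<and> l \<le> m \<longrightarrow> zm 0 l = y l) \<and>
     (\<forall>t\<ge>0.
        ((\<lambda>s. zm s 1) has_real_derivative
           (- Jflux q \<gamma> 1 (zm t) - (\<Sum>k=1..m-1. Jflux q \<gamma> k (zm t)))) (at t within {0..}) \<and>
        (\<forall>l. 2 \<le> l \<and> l \<le> m - 1 \<longrightarrow>
           ((\<lambda>s. zm s l) has_real_derivative
              (Jflux q \<gamma> (l-1) (zm t) - Jflux q \<gamma> l (zm t))) (at t within {0..})) \<and>
        ((\<lambda>s. zm s m) has_real_derivative Jflux q \<gamma> (m-1) (zm t)) (at t within {0..}))"

definition constructed_solution ::
  "(nat \<Rightarrow> real) \<Rightarrow> (nat \<Rightarrow> real) \<Rightarrow> (nat \<Rightarrow> real) \<Rightarrow> (real \<Rightarrow> nat \<Rightarrow> real) \<Rightarrow> bool" where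
  "constructed_solution q \<gamma> y z \<longleftrightarrow>
     (\<exists>zm :: nat \<Rightarrow> real \<Rightarrow> nat \<Rightarrow> real. \<exists>m :: nat \<Rightarrow> nat.
        (\<forall>n\<ge>2. truncated_solution q \<gamma> y n (zm n)) \<and>
        strict_mono m \<and> (\<forall>j. m j \<ge> 2) \<and>
        (\<forall>T\<ge>0. \<forall>l. uniform_limit {0..T} (\<lambda>j t. zm (m j) t l) (\<lambda>t. z t l) sequentially)) \<and>
     (\<forall>t\<ge>0. z t \<in> X0plus) \<and>
     (\<forall>t\<ge>0. ((\<lambda>s. normX (\<lambda>l. z s l - z t l)) \<longlongrightarrow> 0) (at t within {0..})) \<and>
     (\<forall>t\<ge>0. rho (z t) = rho y) \<and>
     (\<forall>l\<ge>2. \<forall>t\<ge>0.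
        ((\<lambda>s. \<Sum>n. z s (n + l)) has_real_derivative Jflux q \<gamma> (l-1) (z t)) (at t within {0..}))"

end

theory Submission
  imports Defs
begin

lemma maxprin:
  fixes M :: "nat \<Rightarrow> real \<Rightarrow> real" and S :: "nat \<Rightarrow> real" and D :: "nat \<Rightarrow> real \<Rightarrow> real"
  assumes Lb: "Lb \<ge> 1" and C: "C \<ge> 0"
    and cont: "\<And>l. l \<ge> Lb \<Longrightarrow> continuous_on {tb..} (M l)"
    and deriv: "\<And>l t. l > Lb \<Longrightarrow> t > tb \<Longrightarrow> (M l has_real_derivative D l t) (at t)"
    and Dle: "\<And>l t. l > Lb \<Longrightarrow> t > tb \<Longrightarrow> (\<forall>j\<ge>Lb. M j t - S j \<le> M l t - S l) \<Longrightarrow> D l t \<le> 0"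
    and bnd: "\<And>l t. l \<ge> Lb \<Longrightarrow> t \<ge> tb \<Longrightarrow> M l t \<le> C / real l"
    and Snn: "\<And>l. S l \<ge> 0"
    and bdry: "\<And>t. t \<ge> tb \<Longrightarrow> M Lb t \<le> S Lb"
    and init: "\<And>l. l \<ge> Lb \<Longrightarrow> M l tb \<le> S l"
  shows "l \<ge> Lb \<Longrightarrow> t \<ge> tb \<Longrightarrow> M l t \<le> S l"
proof (rule ccontr)
  assume l1: "l \<ge> Lb" and t1: "t \<ge> tb" and neg: "\<not> M l t \<le> S l"
  define l1 where "l1 = l"
  define t1 where "t1 = t"
  have l1L: "l1 \<ge> Lb" and t1t: "t1 \<ge> tb" and big: "M l1 t1 > S l1" using l1 t1 neg by (auto simp: l1_def t1_def)
  have "t1 \<noteq> tb" using init[OF l1L] big by auto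
  hence t1g: "t1 > tb" using t1t by auto
  define \<epsilon> where "\<epsilon> = (M l1 t1 - S l1) / (2 * (1 + t1 - tb))"
  have epos: "\<epsilon> > 0" unfolding \<epsilon>_def using big t1g by auto
  have "\<epsilon> * (1 + t1 - tb) = (M l1 t1 - S l1) / 2"
    unfolding \<epsilon>_def using t1g by (simp add: field_simps)
  moreover have "(M l1 t1 - S l1) / 2 < M l1 t1 - S l1" using big by simp
  ultimately have eb: "\<epsilon> * (1 + t1 - tb) < M l1 t1 - S l1" by simp
  define F where "F = (\<lambda>j s. M j s - S j - \<epsilon> * (1 + s - tb))"
  define K where "K = nat \<lceil>C / \<epsilon>\<rceil>"
  define W where "W = {Lb..K}"
  have out: "j \<in> W" if "j \<ge> Lb" "s \<ge> tb" "F j s \<ge> 0" for j s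
  proof -
    have "M j s \<ge> \<epsilon>" using that(3) Snn[of j] epos that(2) unfolding F_def
      by (smt (verit, best) mult_le_cancel_left1)
    hence "\<epsilon> \<le> C / real j" using bnd[OF that(1,2)] by auto
    moreover have "real j > 0" using that(1) Lb by auto
    ultimately have "\<epsilon> * real j \<le> C" by (simp add: field_simps)
    hence "real j \<le> C / \<epsilon>" using epos by (simp add: field_simps)
    hence "j \<le> K" unfolding K_def by linarith
    thus ?thesis using that(1) unfolding W_def by auto
  qed
  define A where "A = (\<Union>j\<in>W. {s \<in> {tb..t1}. 0 \<le> F j s})"
  have clA: "closed A" unfolding A_def W_def
  proof (intro closed_UN ballI)
    fix j assume j: "j \<in> {Lb..K}"
    have "continuous_on {tb..t1} (F j)" unfolding F_def
      by (intro continuous_intros continuous_on_subset[OF cont]) (use j in auto)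
    thus "closed {s \<in> {tb..t1}. 0 \<le> F j s}"
      by (intro continuous_on_closed_Collect_le) (auto intro: continuous_intros)
  qed auto
  have l1W: "l1 \<in> W" using out[OF l1L t1t] eb unfolding F_def by auto
  have t1A: "t1 \<in> A" unfolding A_def F_def using l1W eb t1t by (auto intro!: bexI[of _ l1])
  have bdd: "bdd_below A" unfolding A_def by (auto intro!: bdd_belowI[of _ tb])
  define \<tau> where "\<tau> = Inf A"
  have tauA: "\<tau> \<in> A" unfolding \<tau>_def using closed_contains_Inf[OF _ bdd clA] t1A by auto
  have tau_low: "\<tau> \<le> s" if "s \<in> A" for s unfolding \<tau>_def using cInf_lower[OF that bdd] .
  have tau_rng: "tb \<le> \<tau>" "\<tau> \<le> t1" using tauA unfolding A_def by auto
  have Fneg0: "F j tb < 0" if "j \<ge> Lb" for j using init[OF that] epos unfolding F_def by auto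
  have "\<tau> \<noteq> tb"
  proof
    assume "\<tau> = tb"
    with tauA obtain j where "j \<in> W" "0 \<le> F j tb" unfolding A_def by auto
    thus False using Fneg0[of j] unfolding W_def by auto
  qed
  hence taug: "\<tau> > tb" using tau_rng by auto
  have finW: "finite W" "W \<noteq> {}" unfolding W_def using l1W W_def by auto
  define m where "m = Max ((\<lambda>j. F j \<tau>) ` W)"
  have "m \<in> (\<lambda>j. F j \<tau>) ` W" unfolding m_def using finW by (intro Max_in) auto
  then obtain l where lW: "l \<in> W" and lm: "F l \<tau> = m" by auto
  have lmax: "F j \<tau> \<le> F l \<tau>" if "j \<in> W" for j
    unfolding lm m_def using finW that by (intro Max_ge) auto
  obtain j0 where j0: "j0 \<in> W" "0 \<le> F j0 \<tau>" using tauA unfolding A_def by auto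
  have Flnn: "0 \<le> F l \<tau>" using lmax[OF j0(1)] j0(2) by linarith
  have lL0: "l \<ge> Lb" using lW unfolding W_def by auto
  have allj: "F j \<tau> \<le> F l \<tau>" if "j \<ge> Lb" for j
  proof (cases "j \<in> W")
    case True thus ?thesis by (rule lmax)
  next
    case False
    hence "\<not> F j \<tau> \<ge> 0" using out[OF that] tau_rng by auto
    thus ?thesis using Flnn by linarith
  qed
  have "l \<noteq> Lb"
  proof
    assume "l = Lb"
    hence "F l \<tau> < 0" using bdry[of \<tau>] tau_rng epos taug unfolding F_def
      by (smt (verit, best) mult_pos_pos)
    thus False using Flnn by linarith
  qed
  hence lg: "l > Lb" using lL0 by auto
  have "\<forall>j\<ge>Lb. M j \<tau> - S j \<le> M l \<tau> - S l" using allj unfolding F_def by auto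
  hence Dl: "D l \<tau> \<le> 0" using Dle[OF lg taug] by auto
  have dF: "(F l has_real_derivative (D l \<tau> - \<epsilon>)) (at \<tau>)"
    unfolding F_def by (auto intro!: derivative_eq_intros deriv[OF lg taug])
  obtain d where d: "d > 0" "\<And>h. h > 0 \<Longrightarrow> h < d \<Longrightarrow> F l \<tau> < F l (\<tau> - h)"
    using DERIV_neg_dec_left[OF dF] Dl epos by force
  define h where "h = min (d/2) ((\<tau> - tb)/2)"
  have h: "h > 0" "h < d" "h \<le> (\<tau> - tb)/2" using d taug unfolding h_def by (auto simp: min_def)
  have "F l (\<tau> - h) > 0" using d(2)[OF h(1,2)] Flnn by linarith
  hence "\<tau> - h \<in> A" unfolding A_def using lW h tau_rng by (auto intro!: bexI[of _ l])
  hence "\<tau> \<le> \<tau> - h" by (rule tau_low)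
  thus False using h by linarith
qed


definition uu :: "real \<Rightarrow> nat \<Rightarrow> nat \<Rightarrow> real" where
  "uu \<beta> i l = (if l \<le> i then 1 else \<beta> ^ (l - i))"

lemma uu_nn: "0 \<le> \<beta> \<Longrightarrow> 0 \<le> uu \<beta> i l"
  by (auto simp: uu_def)

lemma uu_le1: "0 \<le> \<beta> \<Longrightarrow> \<beta> \<le> 1 \<Longrightarrow> uu \<beta> i l \<le> 1"
  by (auto simp: uu_def power_le_one)

lemma uu_mono: "0 \<le> \<beta> \<Longrightarrow> \<beta> \<le> 1 \<Longrightarrow> uu \<beta> i (Suc l) \<le> uu \<beta> i l"
proof -
  assume b: "0 \<le> \<beta>" "\<beta> \<le> 1"
  show ?thesis
  proof (cases "Suc l \<le> i")
    case True thus ?thesis by (auto simp: uu_def)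
  next
    case False
    hence "Suc l - i = Suc (l - i)" by auto
    thus ?thesis using False b
      by (auto simp: uu_def power_le_one mult_left_le_one_le)
  qed
qed

lemma uu_super:
  assumes b: "0 \<le> \<beta>" "\<beta> \<le> 1" and R: "0 \<le> R1" "R' \<le> R1 * \<beta>" and l: "l \<ge> 1"
  shows "R' * uu \<beta> i (l - 1) - (R' + R1) * uu \<beta> i l + R1 * uu \<beta> i (Suc l) \<le> 0"
proof -
  consider "Suc l \<le> i" | "l = i" | "l > i" by linarith
  thus ?thesis
  proof cases
    case 1 thus ?thesis by (auto simp: uu_def)
  next
    case 2
    have "R1 * \<beta> \<le> R1" using mult_left_mono[of \<beta> 1 R1] R b by simp
    thus ?thesis using 2 l by (auto simp: uu_def)
  next
    case 3
    define k where "k = l - i - 1"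
    have e1: "uu \<beta> i (l - 1) = \<beta> ^ k" using 3 by (auto simp: uu_def k_def)
    have e2: "uu \<beta> i l = \<beta> ^ k * \<beta>" using 3 by (auto simp: uu_def k_def Suc_diff_Suc power_commutes
      simp flip: power_Suc intro!: arg_cong[where f="\<lambda>n. \<beta> ^ n"])
    have e3: "uu \<beta> i (Suc l) = \<beta> ^ k * \<beta> * \<beta>" using 3 by (auto simp: uu_def k_def power_commutes
      simp flip: power_Suc intro!: arg_cong[where f="\<lambda>n. \<beta> ^ n"])
    have "R' * 1 - (R' + R1) * \<beta> + R1 * (\<beta> * \<beta>) = (1 - \<beta>) * (R' - R1 * \<beta>)" by (simp add: algebra_simps)
    also have "\<dots> \<le> 0" using b R by (intro mult_nonneg_nonpos) auto
    finally have "R' * 1 - (R' + R1) * \<beta> + R1 * (\<beta> * \<beta>) \<le> 0" .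
    hence "\<beta> ^ k * (R' * 1 - (R' + R1) * \<beta> + R1 * (\<beta> * \<beta>)) \<le> 0"
      using b by (intro mult_nonneg_nonpos) auto
    thus ?thesis unfolding e1 e2 e3 by (simp add: algebra_simps)
  qed
qed

lemma uu_sum:
  assumes b: "0 \<le> \<beta>" "\<beta> < 1"
  shows "(\<Sum>l<K. uu \<beta> i l) \<le> real i + 1 + 1 / (1 - \<beta>)"
proof (cases "K \<le> Suc i")
  case True
  have "(\<Sum>l<K. uu \<beta> i l) \<le> (\<Sum>l<K. 1)" using b by (intro sum_mono uu_le1) auto
  also have "\<dots> = real K" by simp
  also have "\<dots> \<le> real i + 1" using True by simp
  finally show ?thesis using b by (smt (verit) divide_nonneg_nonneg)
next
  case False
  then obtain n where K: "K = Suc i + n" by (metis le_add_diff_inverse nat_le_linear)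
  have split: "(\<Sum>l<Suc i + n. f l) = (\<Sum>l<Suc i. f l) + (\<Sum>k<n. f (Suc i + k))" for f :: "nat \<Rightarrow> real"
    by (induction n) auto
  have p1: "(\<Sum>l<Suc i. uu \<beta> i l) = real i + 1" by (simp add: uu_def)
  have p2: "(\<Sum>k<n. uu \<beta> i (Suc i + k)) = (\<Sum>k<n. \<beta> ^ Suc k)"
    by (intro sum.cong) (auto simp: uu_def Suc_diff_le)
  have "(\<Sum>k<n. \<beta> ^ Suc k) \<le> (\<Sum>k<n. \<beta> ^ k)" using b
    by (intro sum_mono) (auto simp: mult_left_le_one_le)
  also have "\<dots> \<le> (\<Sum>k. \<beta> ^ k)" using b
    by (intro sum_le_suminf summable_geometric) auto
  also have "\<dots> = 1 / (1 - \<beta>)" using b by (simp add: suminf_geometric)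
  finally show ?thesis unfolding K split p1 p2 by simp
qed

definition SS :: "real \<Rightarrow> real \<Rightarrow> nat \<Rightarrow> (nat \<Rightarrow> real) \<Rightarrow> nat \<Rightarrow> real" where
  "SS \<beta> c L0 x l = c * uu \<beta> L0 l + (\<Sum>i. x i * uu \<beta> i l)"

context
  fixes \<beta> c :: real and L0 :: nat and x :: "nat \<Rightarrow> real"
  assumes b: "0 \<le> \<beta>" "\<beta> < 1" and c: "c \<ge> 0" and xnn: "\<And>i. x i \<ge> 0"
    and xs: "summable x" and xs1: "summable (\<lambda>i. real i * x i)"
begin

lemma SS_summ: "summable (\<lambda>i. x i * uu \<beta> i l)"
  by (rule summable_comparison_test[OF _ xs])
     (use b xnn uu_nn uu_le1 in \<open>auto intro!: exI[of _ 0] mult_left_le simp: abs_mult\<close>)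

lemma SS_nn: "SS \<beta> c L0 x l \<ge> 0"
  unfolding SS_def using b c xnn uu_nn
  by (intro add_nonneg_nonneg mult_nonneg_nonneg suminf_nonneg SS_summ) auto

lemma SS_mono: "SS \<beta> c L0 x (Suc l) \<le> SS \<beta> c L0 x l"
  unfolding SS_def using b c xnn uu_mono[of \<beta>]
  by (intro add_mono mult_left_mono suminf_le SS_summ) auto

lemma SS_ge_c: "SS \<beta> c L0 x L0 \<ge> c"
proof -
  have "0 \<le> (\<Sum>i. x i * uu \<beta> i L0)" using xnn uu_nn b
    by (intro suminf_nonneg SS_summ) auto
  thus ?thesis unfolding SS_def by (simp add: uu_def)
qed

lemma SS_ge_tail: "SS \<beta> c L0 x l \<ge> (\<Sum>n. x (n + l))"
proof -
  define g where "g = (\<lambda>i. if l \<le> i then x i else 0)"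
  have gs: "summable g" unfolding g_def
    by (rule summable_comparison_test[OF _ xs]) (use xnn in auto)
  have "suminf g = (\<Sum>n. g (n + l)) + sum g {..<l}" by (rule suminf_split_initial_segment[OF gs])
  also have "sum g {..<l} = 0" unfolding g_def by auto
  also have "(\<Sum>n. g (n + l)) = (\<Sum>n. x (n + l))" unfolding g_def by simp
  finally have eq: "suminf g = (\<Sum>n. x (n + l))" by simp
  have "suminf g \<le> (\<Sum>i. x i * uu \<beta> i l)"
    by (intro suminf_le gs SS_summ) (auto simp: g_def uu_def xnn intro!: mult_nonneg_nonneg zero_le_power b(1))
  moreover have "0 \<le> c * uu \<beta> L0 l" using c b uu_nn by auto
  ultimately show ?thesis unfolding SS_def eq by linarith
qed

lemma SS_super:
  assumes R: "0 \<le> R1" "R' \<le> R1 * \<beta>" and l: "l \<ge> 1"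
  shows "R' * SS \<beta> c L0 x (l - 1) - (R' + R1) * SS \<beta> c L0 x l + R1 * SS \<beta> c L0 x (Suc l) \<le> 0"
proof -
  define U where "U = (\<lambda>k. \<Sum>i. x i * uu \<beta> i k)"
  have sup: "R' * uu \<beta> i (l - 1) - (R' + R1) * uu \<beta> i l + R1 * uu \<beta> i (Suc l) \<le> 0" for i
    using uu_super[OF b(1) _ R l] b by auto
  have "R' * U (l - 1) - (R' + R1) * U l + R1 * U (Suc l) =
      (\<Sum>i. R' * (x i * uu \<beta> i (l - 1)) - (R' + R1) * (x i * uu \<beta> i l) + R1 * (x i * uu \<beta> i (Suc l)))"
    unfolding U_def
    by (subst suminf_add[symmetric] suminf_diff[symmetric] suminf_mult[symmetric]
        | intro summable_add summable_diff summable_mult SS_summ)+ (rule refl)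
  also have "\<dots> \<le> (\<Sum>i. (0::real))"
  proof (intro suminf_le)
    fix i
    have "x i * (R' * uu \<beta> i (l - 1) - (R' + R1) * uu \<beta> i l + R1 * uu \<beta> i (Suc l)) \<le> 0"
      using xnn[of i] sup[of i] by (intro mult_nonneg_nonpos) auto
    thus "R' * (x i * uu \<beta> i (l - 1)) - (R' + R1) * (x i * uu \<beta> i l) + R1 * (x i * uu \<beta> i (Suc l)) \<le> 0"
      by (simp add: algebra_simps)
  qed (intro summable_add summable_diff summable_mult SS_summ, simp)
  finally have A: "R' * U (l - 1) - (R' + R1) * U l + R1 * U (Suc l) \<le> 0" by simp
  have B: "c * (R' * uu \<beta> L0 (l - 1) - (R' + R1) * uu \<beta> L0 l + R1 * uu \<beta> L0 (Suc l)) \<le> 0"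
    using c sup[of L0] by (intro mult_nonneg_nonpos) auto
  show ?thesis using A B unfolding SS_def U_def by (simp add: algebra_simps)
qed

lemma SS_summable: "summable (SS \<beta> c L0 x)"
proof (rule summableI_nonneg_bounded)
  fix l show "0 \<le> SS \<beta> c L0 x l" by (rule SS_nn)
next
  fix K
  define B where "B = (\<lambda>i::nat. real i + 1 + 1 / (1 - \<beta>))"
  have "(\<lambda>i. x i * B i) = (\<lambda>i. real i * x i + (1 + 1/(1-\<beta>)) * x i)"
    unfolding B_def by (auto simp: algebra_simps fun_eq_iff)
  hence bs: "summable (\<lambda>i. x i * B i)"
    by (simp only:) (intro summable_add summable_mult xs xs1)
  have "(\<Sum>l<K. SS \<beta> c L0 x l) = c * (\<Sum>l<K. uu \<beta> L0 l) + (\<Sum>l<K. \<Sum>i. x i * uu \<beta> i l)"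
    unfolding SS_def by (simp add: sum.distrib sum_distrib_left)
  also have "(\<Sum>l<K. \<Sum>i. x i * uu \<beta> i l) = (\<Sum>i. \<Sum>l<K. x i * uu \<beta> i l)"
    by (rule suminf_sum[symmetric]) (rule SS_summ)
  also have "\<dots> \<le> (\<Sum>i. x i * B i)"
  proof (rule suminf_le)
    fix i
    show "(\<Sum>l<K. x i * uu \<beta> i l) \<le> x i * B i"
      unfolding sum_distrib_left[symmetric] B_def using uu_sum[OF b] xnn[of i]
      by (intro mult_left_mono) auto
  qed (intro summable_sum SS_summ, rule bs)
  also have "c * (\<Sum>l<K. uu \<beta> L0 l) \<le> c * B L0" unfolding B_def
    using uu_sum[OF b] c by (intro mult_left_mono) auto
  finally show "(\<Sum>l<K. SS \<beta> c L0 x l) \<le> c * B L0 + (\<Sum>i. x i * B i)" by simp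
qed

end



lemma sbp:
  fixes x T :: "nat \<Rightarrow> real"
  assumes xT: "\<And>n. x n = T n - T (Suc n)" and LK: "L \<le> K"
  shows "(\<Sum>n\<in>{L..<K}. real n * x n) + (real K - 1) * T K = (real L - 1) * T L + (\<Sum>n\<in>{L..<K}. T n)"
  using LK
proof (induction K rule: dec_induct)
  case base thus ?case by simp
next
  case (step K)
  have "(\<Sum>n\<in>{L..<Suc K}. real n * x n) + (real (Suc K) - 1) * T (Suc K)
      = ((\<Sum>n\<in>{L..<K}. real n * x n) + (real K - 1) * T K) + T K"
    using step(1) by (simp add: xT algebra_simps)
  also have "\<dots> = (real L - 1) * T L + (\<Sum>n\<in>{L..<Suc K}. T n)" using step by simp
  finally show ?case .
qed

lemma tail_bound:
  fixes x T S :: "nat \<Rightarrow> real"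
  assumes xnn: "\<And>n. x n \<ge> 0" and xs1: "summable (\<lambda>n. real n * x n)"
    and xT: "\<And>n. x n = T n - T (Suc n)" and Tnn: "\<And>n. T n \<ge> 0"
    and TS: "\<And>n. n \<ge> L \<Longrightarrow> T n \<le> S n" and L: "L \<ge> 1"
    and B: "\<And>K. (\<Sum>n\<in>{L..<K}. S n) \<le> B"
  shows "(\<Sum>n. real n * x n) \<le> (\<Sum>n<L. real n * x n) + (real L - 1) * S L + B"
proof (rule suminf_le_const[OF xs1])
  fix K
  show "(\<Sum>n<K. real n * x n) \<le> (\<Sum>n<L. real n * x n) + (real L - 1) * S L + B"
  proof (cases "K \<le> L")
    case True
    have "(\<Sum>n<K. real n * x n) \<le> (\<Sum>n<L. real n * x n)"
      using True xnn by (intro sum_mono2) auto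
    moreover have "0 \<le> (real L - 1) * S L" using L Tnn[of L] TS[of L] by auto
    moreover have "0 \<le> B" using B[of 0] by simp
    ultimately show ?thesis by linarith
  next
    case False
    have un: "{..<K} = {..<L} \<union> {L..<K}" using False by auto
    have "(\<Sum>n<K. real n * x n) = (\<Sum>n<L. real n * x n) + (\<Sum>n\<in>{L..<K}. real n * x n)"
      unfolding un by (rule sum.union_disjoint) auto
    moreover have "(\<Sum>n\<in>{L..<K}. real n * x n) + (real K - 1) * T K = (real L - 1) * T L + (\<Sum>n\<in>{L..<K}. T n)"
      using sbp[of x T L K, OF xT] False by simp
    moreover have "0 \<le> (real K - 1) * T K" using Tnn[of K] False L by auto
    moreover have "(real L - 1) * T L \<le> (real L - 1) * S L" using L TS[of L] by (intro mult_left_mono) auto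
    moreover have "(\<Sum>n\<in>{L..<K}. T n) \<le> (\<Sum>n\<in>{L..<K}. S n)" using TS by (intro sum_mono) auto
    moreover note B[of K]
    ultimately show ?thesis by linarith
  qed
qed


theorem theorem17:
  fixes q \<gamma> y :: "nat \<Rightarrow> real" and R R' t0 :: real and z :: "real \<Rightarrow> nat \<Rightarrow> real"
  assumes q_pos: "\<forall>l\<ge>1. q l > 0" and q1: "q 1 = 1"
    and R_lim: "(\<lambda>l. q l / q (Suc l)) \<longlonglongrightarrow> R" and R_pos: "0 < R"
    and gamma_pos: "\<forall>l\<ge>1. \<gamma> l > 0" and gamma_lim: "(\<lambda>l. \<gamma> l / real l) \<longlonglongrightarrow> 0"
    and y: "y \<in> X0plus" and y1: "y 1 > 0" and rho0: "rho y > 0"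
    and z: "constructed_solution q \<gamma> y z"
    and R': "0 \<le> R'" "R' < R" and t0: "t0 \<ge> 0"
    and lam: "\<forall>t\<ge>t0. z t 1 / Nmass (z t) \<le> R'"
  shows "\<forall>w \<in> omega_limit_set z. rho w = rho y"
proof -
  define \<rho>0 where "\<rho>0 = rho y"
  have Xp: "\<And>t. t \<ge> 0 \<Longrightarrow> z t \<in> X0plus"
    and rhoc: "\<And>t. t \<ge> 0 \<Longrightarrow> rho (z t) = \<rho>0"
    and der: "\<And>l t. l \<ge> 2 \<Longrightarrow> t \<ge> 0 \<Longrightarrow>
        ((\<lambda>s. \<Sum>n. z s (n + l)) has_real_derivative Jflux q \<gamma> (l-1) (z t)) (at t within {0..})"
    using z unfolding constructed_solution_def \<rho>0_def by auto
  have znn: "\<And>t l. t \<ge> 0 \<Longrightarrow> z t l \<ge> 0" using Xp unfolding X0plus_def by auto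
  have z0: "\<And>t. t \<ge> 0 \<Longrightarrow> z t 0 = 0" using Xp unfolding X0plus_def Xspace_def by auto
  have s1: "summable (\<lambda>l. real l * z t l)" if "t \<ge> 0" for t
  proof -
    have "summable (\<lambda>l. real l * \<bar>z t l\<bar>)" using Xp[OF that] unfolding X0plus_def Xspace_def by auto
    thus ?thesis using znn[OF that] by simp
  qed
  have s0: "summable (z t)" if "t \<ge> 0" for t
  proof (rule summable_comparison_test[OF _ s1[OF that]])
    show "\<exists>N. \<forall>n\<ge>N. norm (z t n) \<le> real n * z t n"
    proof (intro exI[of _ 1] allI impI)
      fix n :: nat assume n: "n \<ge> 1"
      have "1 * z t n \<le> real n * z t n" using n znn[OF that] by (intro mult_right_mono) auto
      thus "norm (z t n) \<le> real n * z t n" using znn[OF that] by simp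
    qed
  qed
  have rhoeq: "(\<Sum>l. real l * z t l) = \<rho>0" if "t \<ge> 0" for t
    using rhoc[OF that] unfolding rho_def by simp
  define M where "M = (\<lambda>l t. \<Sum>n. z t (n + l))"
  have Mshift: "z t l = M l t - M (Suc l) t" if "t \<ge> 0" for t l
  proof -
    have sm: "summable (\<lambda>n. z t (n + l))" using s0[OF that] by (simp add: summable_iff_shift)
    have "(\<Sum>n. z t (Suc n + l)) = (\<Sum>n. z t (n + l)) - z t (0 + l)"
      using suminf_split_head[OF sm] by simp
    thus ?thesis unfolding M_def by simp
  qed
  have Mnn: "M l t \<ge> 0" if "t \<ge> 0" for t l
    unfolding M_def using s0[OF that] znn[OF that] by (intro suminf_nonneg) (auto simp: summable_iff_shift)
  have Mbnd: "M l t \<le> \<rho>0 / real l" if "t \<ge> 0" "l \<ge> 1" for t l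
  proof -
    have sm: "summable (\<lambda>n. z t (n + l))" using s0[OF that(1)] by (simp add: summable_iff_shift)
    have sm1: "summable (\<lambda>n. real (n + l) * z t (n + l))"
      using s1[OF that(1)] summable_iff_shift[of "\<lambda>n. real n * z t n" l] by simp
    have "real l * M l t = (\<Sum>n. real l * z t (n + l))" unfolding M_def using sm by (simp add: suminf_mult)
    also have "\<dots> \<le> (\<Sum>n. real (n + l) * z t (n + l))"
      using sm sm1 znn[OF that(1)] by (intro suminf_le summable_mult) (auto intro: mult_right_mono)
    also have "\<dots> \<le> (\<Sum>n. real (n + l) * z t (n + l)) + (\<Sum>n<l. real n * z t n)"
      using znn[OF that(1)] by (simp add: sum_nonneg)
    also have "\<dots> = (\<Sum>n. real n * z t n)"
      using suminf_split_initial_segment[OF s1[OF that(1)], of l] by simp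
    also have "\<dots> = \<rho>0" by (rule rhoeq[OF that(1)])
    finally show ?thesis using that(2) by (simp add: field_simps)
  qed
  have Nnn: "Nmass (z t) \<ge> 0" if "t \<ge> 0" for t
    unfolding Nmass_def using znn[OF that] s0[OF that] by (intro suminf_nonneg) auto
  have z1N: "z t 1 \<le> Nmass (z t)" if "t \<ge> 0" for t
    unfolding Nmass_def using sum_le_suminf[OF s0[OF that], of "{1}"] znn[OF that] by auto
  have z1R: "z t 1 \<le> R' * Nmass (z t)" if "t \<ge> t0" for t
  proof (cases "Nmass (z t) > 0")
    case True thus ?thesis using lam that by (auto simp: divide_le_eq mult.commute)
  next
    case False thus ?thesis using Nnn[of t] z1N[of t] that t0 by auto
  qed
  define R1 where "R1 = (R' + R) / 2"
  define \<beta> where "\<beta> = (R' + R1) / (2 * R1)"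
  have R1: "R' < R1" "R1 < R" "0 < R1" using R' R_pos unfolding R1_def by auto
  have bet: "0 \<le> \<beta>" "\<beta> < 1" "R' \<le> R1 * \<beta>" using R1 R' unfolding \<beta>_def by (auto simp: field_simps)
  obtain N0 where N0: "\<And>k. k \<ge> N0 \<Longrightarrow> R1 < q k / q (Suc k)"
    using order_tendstoD(1)[OF R_lim R1(2)] unfolding eventually_sequentially by auto
  define L0 where "L0 = max 2 N0"
  have L0: "L0 \<ge> 2" "L0 \<ge> N0" unfolding L0_def by auto
  define S where "S = SS \<beta> \<rho>0 L0 (z t0)"
  have rp: "\<rho>0 \<ge> 0" using rho0 unfolding \<rho>0_def by simp
  note Sfacts = SS_nn[OF bet(1,2) rp znn[OF t0] s0[OF t0] s1[OF t0]]
     SS_mono[OF bet(1,2) rp znn[OF t0] s0[OF t0] s1[OF t0]]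
     SS_ge_c[OF bet(1,2) rp znn[OF t0] s0[OF t0] s1[OF t0]]
     SS_ge_tail[OF bet(1,2) rp znn[OF t0] s0[OF t0] s1[OF t0]]
     SS_super[OF bet(1,2) rp znn[OF t0] s0[OF t0] s1[OF t0]]
     SS_summable[OF bet(1,2) rp znn[OF t0] s0[OF t0] s1[OF t0]]
  have Sfacts': "\<And>l. S l \<ge> 0" "\<And>l. S (Suc l) \<le> S l" "S L0 \<ge> \<rho>0" "\<And>l. S l \<ge> M l t0"
     "\<And>l. l \<ge> 1 \<Longrightarrow> R' * S (l - 1) - (R' + R1) * S l + R1 * S (Suc l) \<le> 0" "summable S"
    unfolding S_def M_def using Sfacts R1 bet by auto
  have Mle: "M l t \<le> S l" if "l \<ge> L0" "t \<ge> t0" for l t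
  proof (rule maxprin[where M=M and S=S and D="\<lambda>l t. Jflux q \<gamma> (l-1) (z t)" and Lb=L0 and C=\<rho>0 and tb=t0])
    show "1 \<le> L0" using L0 by auto
    show "0 \<le> \<rho>0" by (rule rp)
    show "continuous_on {t0..} (M l)" if "L0 \<le> l" for l
    proof -
      have "continuous_on {0..} (M l)" unfolding M_def
        by (rule DERIV_continuous_on[OF der]) (use that L0 in auto)
      thus ?thesis by (rule continuous_on_subset) (use t0 in auto)
    qed
    show "(M l has_real_derivative Jflux q \<gamma> (l - 1) (z t)) (at t)" if "L0 < l" "t0 < t" for l t
    proof -
      have "(M l has_real_derivative Jflux q \<gamma> (l - 1) (z t)) (at t within {0..})"
        unfolding M_def by (rule der) (use that L0 t0 in auto)
      moreover have "at t within {0..} = at t"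
        by (rule at_within_interior) (use that t0 in \<open>auto simp: interior_real_atLeast\<close>)
      ultimately show ?thesis by simp
    qed
    show "Jflux q \<gamma> (l - 1) (z t) \<le> 0"
      if lt: "L0 < l" "t0 < t" and mx: "\<forall>j\<ge>L0. M j t - S j \<le> M l t - S l" for l t
    proof -
      have t0': "t \<ge> 0" "t \<ge> t0" using lt t0 by auto
      define N where "N = Nmass (z t)"
      have sl: "Suc (l - 1) = l" using lt by auto
      have g: "\<gamma> (l - 1) \<ge> 0" using gamma_pos lt L0 by (auto intro: less_imp_le)
      have r: "q (l - 1) / q l \<ge> R1" proof -
        have "N0 \<le> l - 1" using lt L0 by auto
        hence "R1 < q (l - 1) / q (Suc (l - 1))" by (rule N0)
        thus ?thesis using sl by simp
      qed
      have a: "z t (l - 1) \<ge> 0" "z t l \<ge> 0" using znn t0' by auto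
      have Nn: "N \<ge> 0" unfolding N_def using Nnn t0' by auto
      have e1: "z t (l - 1) = M (l - 1) t - M l t" using Mshift[OF t0'(1), of "l - 1"] sl by simp
      have e2: "z t l = M l t - M (Suc l) t" using Mshift[OF t0'(1)] by simp
      have J: "Jflux q \<gamma> (l - 1) (z t) = \<gamma> (l - 1) * (z t 1 * z t (l - 1) - N * (q (l - 1) / q l) * z t l)"
        unfolding Jflux_def N_def using sl by simp
      have b1: "z t 1 * z t (l - 1) \<le> R' * N * z t (l - 1)"
        using z1R[OF t0'(2)] a by (intro mult_right_mono) (auto simp: N_def)
      have b2: "N * R1 * z t l \<le> N * (q (l - 1) / q l) * z t l"
        using r Nn a by (intro mult_right_mono mult_left_mono) auto
      have sup: "R' * S (l - 1) - (R' + R1) * S l + R1 * S (Suc l) \<le> 0" using Sfacts'(5) lt by auto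
      have m1: "M (l - 1) t - S (l - 1) \<le> M l t - S l" using mx lt by auto
      have m2: "M (Suc l) t - S (Suc l) \<le> M l t - S l" using mx lt by auto
      have X: "R' * z t (l - 1) - R1 * z t l \<le> 0"
      proof -
        have "R' * (M (l - 1) t - S (l - 1) - (M l t - S l)) \<le> 0" using R' m1 by (intro mult_nonneg_nonpos) auto
        moreover have "R1 * (M (Suc l) t - S (Suc l) - (M l t - S l)) \<le> 0" using R1 m2 by (intro mult_nonneg_nonpos) auto
        ultimately show ?thesis unfolding e1 e2 using sup by (simp add: algebra_simps)
      qed
      have "z t 1 * z t (l - 1) - N * (q (l - 1) / q l) * z t l \<le> N * (R' * z t (l - 1) - R1 * z t l)"
        using b1 b2 by (simp add: algebra_simps)
      also have "\<dots> \<le> 0" using Nn X by (rule mult_nonneg_nonpos)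
      finally show ?thesis unfolding J using g by (simp add: mult_nonneg_nonpos)
    qed
    show "M l t \<le> \<rho>0 / real l" if "L0 \<le> l" "t0 \<le> t" for l t
      using Mbnd[of t l] that t0 L0 by auto
    show "0 \<le> S l" for l by (rule Sfacts'(1))
    show "M L0 t \<le> S L0" if "t0 \<le> t" for t
    proof -
      have "M L0 t \<le> \<rho>0 / real L0" using Mbnd[of t L0] that t0 L0 by auto
      also have "\<dots> \<le> \<rho>0" using rp L0 mult_left_mono[of 1 "real L0" \<rho>0] by (simp add: divide_le_eq)
      finally show ?thesis using Sfacts'(3) by linarith
    qed
    show "M l t0 \<le> S l" for l by (rule Sfacts'(4))
  qed (use that in auto)
  have tail: "\<exists>L. \<forall>t\<ge>t0. \<rho>0 \<le> (\<Sum>n<L. real n * z t n) + 3 * \<epsilon>" if ep: "\<epsilon> > 0" for \<epsilon>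
  proof -
    obtain m0 where m0: "\<And>m n. m \<ge> m0 \<Longrightarrow> norm (sum S {m..<n}) < \<epsilon>"
      using Sfacts'(6) ep unfolding summable_Cauchy by meson
    define m where "m = max m0 L0"
    define L where "L = 2 * m"
    have m: "m \<ge> m0" "m \<ge> L0" "m \<ge> 1" using L0 unfolding m_def by auto
    have Sm: "\<And>n n'. n \<le> n' \<Longrightarrow> S n' \<le> S n"
      by (rule lift_Suc_antimono_le[of S]) (use Sfacts'(2) in auto)
    have Sn: "\<And>a b. 0 \<le> sum S {a..<b}" using Sfacts'(1) by (simp add: sum_nonneg)
    have B: "sum S {L..<K} \<le> \<epsilon>" for K using m0[of L K] m Sn[of L K] unfolding L_def by auto
    have "real m * S L = (\<Sum>n\<in>{m..<L}. S L)" unfolding L_def by simp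
    also have "\<dots> \<le> sum S {m..<L}" by (intro sum_mono Sm) auto
    also have "\<dots> \<le> \<epsilon>" using m0[of m L] m Sn[of m L] by auto
    finally have mS: "real m * S L \<le> \<epsilon>" .
    have LS: "(real L - 1) * S L \<le> 2 * \<epsilon>"
    proof -
      have "(real L - 1) * S L \<le> real L * S L" using Sfacts'(1)[of L] by (simp add: algebra_simps)
      also have "\<dots> = 2 * (real m * S L)" unfolding L_def by simp
      finally show ?thesis using mS by linarith
    qed
    show ?thesis
    proof (intro exI allI impI)
      fix t assume tt: "t \<ge> t0"
      hence t0': "t \<ge> 0" using t0 by auto
      have "(\<Sum>n. real n * z t n) \<le> (\<Sum>n<L. real n * z t n) + (real L - 1) * S L + \<epsilon>"
        by (rule tail_bound[where T="\<lambda>n. M n t"])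
           (use znn[OF t0'] s1[OF t0'] Mshift[OF t0'] Mnn[OF t0'] Mle tt m B in \<open>auto simp: L_def\<close>)
      thus "\<rho>0 \<le> (\<Sum>n<L. real n * z t n) + 3 * \<epsilon>" using rhoeq[OF t0'] LS by linarith
    qed
  qed
  show ?thesis
  proof
    fix w assume "w \<in> omega_limit_set z"
    then obtain tk :: "nat \<Rightarrow> real" where tk: "filterlim tk at_top sequentially"
      and ws: "weak_star_conv (\<lambda>k. z (tk k)) w" unfolding omega_limit_set_def by auto
    have wX: "w \<in> Xspace" and conv: "\<And>l. (\<lambda>k. z (tk k) l) \<longlonglongrightarrow> w l"
      using ws unfolding weak_star_conv_def by auto
    have ev: "eventually (\<lambda>k. tk k \<ge> t0) sequentially" using tk unfolding filterlim_at_top by auto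
    have ev0: "eventually (\<lambda>k. tk k \<ge> 0) sequentially" using ev by eventually_elim (use t0 in auto)
    have wnn: "w l \<ge> 0" for l
      by (rule tendsto_lowerbound[OF conv]) (use ev0 znn in \<open>auto elim: eventually_mono\<close>)
    have wsum: "summable (\<lambda>l. real l * w l)"
      using wX wnn unfolding Xspace_def by simp
    have fin: "(\<lambda>k. \<Sum>n<K. real n * z (tk k) n) \<longlonglongrightarrow> (\<Sum>n<K. real n * w n)" for K
      by (intro tendsto_sum tendsto_mult tendsto_const conv)
    have up: "(\<Sum>n<K. real n * w n) \<le> \<rho>0" for K
    proof (rule tendsto_upperbound[OF fin])
      show "eventually (\<lambda>k. (\<Sum>n<K. real n * z (tk k) n) \<le> \<rho>0) sequentially"
        using ev0
      proof eventually_elim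
        case (elim k)
        have "(\<Sum>n<K. real n * z (tk k) n) \<le> (\<Sum>n. real n * z (tk k) n)"
          using s1[OF elim] znn[OF elim] by (intro sum_le_suminf) auto
        thus ?case using rhoeq[OF elim] by simp
      qed
    qed simp
    have le: "rho w \<le> \<rho>0" unfolding rho_def by (rule suminf_le_const[OF wsum up])
    have ge: "\<rho>0 - 3 * \<epsilon> \<le> rho w" if ep: "\<epsilon> > 0" for \<epsilon>
    proof -
      obtain L where L: "\<And>t. t \<ge> t0 \<Longrightarrow> \<rho>0 \<le> (\<Sum>n<L. real n * z t n) + 3 * \<epsilon>" using tail[OF ep] by auto
      have "\<rho>0 - 3 * \<epsilon> \<le> (\<Sum>n<L. real n * w n)"
        by (rule tendsto_lowerbound[OF fin]) (use ev L in \<open>auto elim!: eventually_mono simp: algebra_simps\<close>)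
      also have "\<dots> \<le> rho w" unfolding rho_def using wsum wnn by (intro sum_le_suminf) auto
      finally show ?thesis .
    qed
    have "\<rho>0 \<le> rho w"
    proof (rule ccontr)
      assume na: "\<not> \<rho>0 \<le> rho w"
      hence "(\<rho>0 - rho w) / 6 > 0" by simp
      from ge[OF this] show False using na by (simp add: field_simps)
    qed
    thus "rho w = rho y" using le unfolding \<rho>0_def by simp
  qed
qed

end
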